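(* For all positive integers $m,n$, \[ \overline{ {m+n \brack n }}_{q,t} = { m+n \brack n }_{q}\; {}_{2}\phi_{1} ( q^{-n}, q^{-m} ; q^{-n-m} ; q, -tq). \]
   Context: An overpartition is a partition in which the last occurrence of each distinct part size may be overlined; its weight $|\lambda|$ is the sum of its parts. $\overline{{m+n \brack n}}_{q,t}=\sum_{\lambda} t^{\#_o(\lambda)} q^{|\lambda|}$, the sum over all overpartitions $\lambda$ with largest part at most $m$ and at most $n$ parts, $\#_o(\lambda)$ being the number of overlined parts. ${m+n \brack n}_q=\frac{(q;q)_{m+n}}{(q;q)_m(q;q)_n}$ is the Gaussian polynomial, with $(a;q)_k=\prod_{j=1}^k(1-aq^{j-1})$. The basic hypergeometric series is ${}_{2}\phi_{1}(a_1,a_2;b_1;q,z)=\sum_{k\ge0}\frac{(a_1;q)_k(a_2;q)_k}{(q;q)_k(b_1;q)_k}z^k$ (here terminating, since $(q^{-n};q)_k=0$ for $k>n$). *)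

theory Defs
  imports Complex_Main
begin

text \<open>An overpartition is encoded in frequency notation: \<open>c j\<close> is the number of
  parts equal to \<open>j\<close> (parts are positive integers), and \<open>S\<close> is the set of part sizes
  whose last occurrence is overlined (so \<open>S\<close> is a subset of the occurring part sizes).\<close>

definition overpartitions_bounded :: "nat \<Rightarrow> nat \<Rightarrow> ((nat \<Rightarrow> nat) \<times> nat set) set" where
  "overpartitions_bounded m n =
     {(c, S). (\<forall>j. c j \<noteq> 0 \<longrightarrow> 1 \<le> j \<and> j \<le> m)
            \<and> (\<Sum>j\<in>{j. c j \<noteq> 0}. c j) \<le> n
            \<and> S \<subseteq> {j. c j \<noteq> 0}}"

definition op_weight :: "(nat \<Rightarrow> nat) \<Rightarrow> nat" where
  "op_weight c = (\<Sum>j\<in>{j. c j \<noteq> 0}. j * c j)"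

definition over_gauss :: "nat \<Rightarrow> nat \<Rightarrow> complex \<Rightarrow> complex \<Rightarrow> complex" where
  "over_gauss m n q t =
     (\<Sum>p\<in>overpartitions_bounded m n. t ^ card (snd p) * q ^ op_weight (fst p))"

definition qpoch :: "complex \<Rightarrow> complex \<Rightarrow> nat \<Rightarrow> complex" where
  "qpoch a q k = (\<Prod>j<k. (1 - a * q ^ j))"

definition gauss_binom :: "nat \<Rightarrow> nat \<Rightarrow> complex \<Rightarrow> complex" where
  "gauss_binom N k q = qpoch q q N / (qpoch q q (N - k) * qpoch q q k)"

definition phi21 :: "complex \<Rightarrow> complex \<Rightarrow> complex \<Rightarrow> complex \<Rightarrow> complex \<Rightarrow> complex" where
  "phi21 a1 a2 b1 q z =
     (\<Sum>k. qpoch a1 q k * qpoch a2 q k / (qpoch q q k * qpoch b1 q k) * z ^ k)"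

end

theory Submission
  imports Defs
begin


definition Cx :: "nat \<Rightarrow> nat \<Rightarrow> (nat\<Rightarrow>nat) set" where
  "Cx m n = {c. (\<forall>j. c j \<noteq> 0 \<longrightarrow> 1 \<le> j \<and> j \<le> m) \<and> (\<Sum>j\<in>{j. c j \<noteq> 0}. c j) \<le> n}"

definition Fv :: "complex \<Rightarrow> complex \<Rightarrow> (nat\<Rightarrow>nat) \<Rightarrow> complex" where
  "Fv q t c = (1+t)^card {j. c j \<noteq> 0} * q^op_weight c"

definition FF :: "complex \<Rightarrow> complex \<Rightarrow> nat \<Rightarrow> nat \<Rightarrow> complex" where
  "FF q t m n = (\<Sum>c\<in>Cx m n. Fv q t c)"

lemma Cx_supp: "c \<in> Cx m n \<Longrightarrow> {j. c j \<noteq> 0} \<subseteq> {1..m}"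
  by (auto simp: Cx_def)

lemma Cx_fin: "c \<in> Cx m n \<Longrightarrow> finite {j. c j \<noteq> 0}"
  by (rule finite_subset[OF Cx_supp]) auto

lemma Cx_le: assumes "c \<in> Cx m n" shows "c j \<le> n"
proof (cases "c j = 0")
  case False
  have "c j \<le> (\<Sum>j\<in>{j. c j \<noteq> 0}. c j)"
    by (rule member_le_sum) (use False Cx_fin[OF assms] in auto)
  then show ?thesis using assms by (auto simp: Cx_def)
qed simp

lemma finite_Cx: "finite (Cx m n)"
proof -
  have "Cx m n \<subseteq> {f. \<forall>x. (x \<in> {1..m} \<longrightarrow> f x \<in> {..n}) \<and> (x \<notin> {1..m} \<longrightarrow> f x = 0)}"
  proof
    fix c assume c: "c \<in> Cx m n"
    have "\<forall>x. (x \<in> {1..m} \<longrightarrow> c x \<in> {..n}) \<and> (x \<notin> {1..m} \<longrightarrow> c x = 0)"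
    proof (intro allI conjI impI)
      fix x show "c x \<in> {..n}" using Cx_le[OF c, of x] by simp
    next
      fix x assume "x \<notin> {1..m}" then show "c x = 0" using Cx_supp[OF c] by blast
    qed
    then show "c \<in> {f. \<forall>x. (x \<in> {1..m} \<longrightarrow> f x \<in> {..n}) \<and> (x \<notin> {1..m} \<longrightarrow> f x = 0)}" by simp
  qed
  then show ?thesis
    by (rule finite_subset) (rule finite_set_of_finite_funs[of "{1..m}" "{..n}" 0], auto)
qed

lemma sum_pow_card: "finite A \<Longrightarrow> (\<Sum>S\<in>Pow A. t ^ card S) = (1 + t) ^ card A" for t :: complex
proof (induction A rule: finite_induct)
  case empty then show ?case by simp
next
  case (insert a A)
  have "(\<Sum>S\<in>Pow (insert a A). t ^ card S) =
        (\<Sum>S\<in>Pow A. t ^ card S) + (\<Sum>S\<in>insert a ` Pow A. t ^ card S)"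
    unfolding Pow_insert
    by (rule sum.union_disjoint) (use insert in auto)
  also have "(\<Sum>S\<in>insert a ` Pow A. t ^ card S) = (\<Sum>S\<in>Pow A. t ^ card (insert a S))"
    by (subst sum.reindex) (use insert in \<open>auto simp: inj_on_def\<close>)
  also have "\<dots> = (\<Sum>S\<in>Pow A. t * t ^ card S)"
  proof (rule sum.cong)
    fix S assume "S \<in> Pow A"
    then have "finite S" "a \<notin> S" using insert finite_subset by auto
    then show "t ^ card (insert a S) = t * t ^ card S" by simp
  qed simp
  finally show ?case using insert by (simp add: sum_distrib_left[symmetric] algebra_simps)
qed

lemma over_gauss_FF: "over_gauss m n q t = FF q t m n"
proof -
  have eq: "overpartitions_bounded m n = Sigma (Cx m n) (\<lambda>c. Pow {j. c j \<noteq> 0})"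
    by (auto simp: overpartitions_bounded_def Cx_def)
  have "over_gauss m n q t = (\<Sum>c\<in>Cx m n. \<Sum>S\<in>Pow {j. c j \<noteq> 0}. t ^ card S * q ^ op_weight c)"
    unfolding over_gauss_def eq
    using sum.Sigma[of "Cx m n" "\<lambda>c. Pow {j. c j \<noteq> 0}" "\<lambda>c S. t ^ card S * q ^ op_weight c"]
      finite_Cx Cx_fin by (simp add: split_def)
  also have "\<dots> = FF q t m n"
    unfolding FF_def Fv_def
  proof (rule sum.cong)
    fix c assume "c \<in> Cx m n"
    then have fin: "finite {j. c j \<noteq> 0}" by (rule Cx_fin)
    show "(\<Sum>S\<in>Pow {j. c j \<noteq> 0}. t ^ card S * q ^ op_weight c) = (1 + t) ^ card {j. c j \<noteq> 0} * q ^ op_weight c"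
      unfolding sum_distrib_right[symmetric] sum_pow_card[OF fin] ..
  qed simp
  finally show ?thesis .
qed

lemma upd_facts:
  assumes fin: "finite {j. c j \<noteq> 0}" and cM: "c M = 0"
  shows "(\<Sum>j\<in>{j. (c(M:=a)) j \<noteq> 0}. (c(M:=a)) j) = (\<Sum>j\<in>{j. c j \<noteq> 0}. c j) + a"
    and "op_weight (c(M:=a)) = op_weight c + M * a"
    and "card {j. (c(M:=a)) j \<noteq> 0} = card {j. c j \<noteq> 0} + (if a = 0 then 0 else 1)"
proof -
  have nM: "M \<notin> {j. c j \<noteq> 0}" using cM by simp
  have same: "\<And>j. j \<in> {j. c j \<noteq> 0} \<Longrightarrow> (c(M:=a)) j = c j" using cM by auto
  have "(\<Sum>j\<in>{j. (c(M:=a)) j \<noteq> 0}. (c(M:=a)) j) = (\<Sum>j\<in>{j. c j \<noteq> 0}. c j) + a \<and>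
    op_weight (c(M:=a)) = op_weight c + M * a \<and>
    card {j. (c(M:=a)) j \<noteq> 0} = card {j. c j \<noteq> 0} + (if a = 0 then 0 else 1)"
  proof (cases "a = 0")
    case True
    then have "c(M:=a) = c" using cM by auto
    then show ?thesis using True by auto
  next
    case False
    then have sp: "{j. (c(M:=a)) j \<noteq> 0} = insert M {j. c j \<noteq> 0}" using cM by auto
    have s1: "(\<Sum>j\<in>{j. c j \<noteq> 0}. (c(M:=a)) j) = (\<Sum>j\<in>{j. c j \<noteq> 0}. c j)"
      by (rule sum.cong) (use same in auto)
    have s2: "(\<Sum>j\<in>{j. c j \<noteq> 0}. j * (c(M:=a)) j) = (\<Sum>j\<in>{j. c j \<noteq> 0}. j * c j)"
      by (rule sum.cong) (use same in auto)
    have "(\<Sum>j\<in>{j. (c(M:=a)) j \<noteq> 0}. (c(M:=a)) j) = (\<Sum>j\<in>{j. c j \<noteq> 0}. c j) + a"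
      unfolding sp using sum.insert[OF fin nM, of "c(M:=a)"] s1 by simp
    moreover have "op_weight (c(M:=a)) = op_weight c + M * a"
      unfolding op_weight_def sp using sum.insert[OF fin nM, of "\<lambda>j. j * (c(M:=a)) j"] s2 by simp
    moreover have "card {j. (c(M:=a)) j \<noteq> 0} = card {j. c j \<noteq> 0} + (if a = 0 then 0 else 1)"
      unfolding sp using card_insert_disjoint[OF fin nM] False by simp
    ultimately show ?thesis by blast
  qed
  then show "(\<Sum>j\<in>{j. (c(M:=a)) j \<noteq> 0}. (c(M:=a)) j) = (\<Sum>j\<in>{j. c j \<noteq> 0}. c j) + a"
    "op_weight (c(M:=a)) = op_weight c + M * a"
    "card {j. (c(M:=a)) j \<noteq> 0} = card {j. c j \<noteq> 0} + (if a = 0 then 0 else 1)" by blast+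
qed

lemma Fv_upd:
  assumes fin: "finite {j. c j \<noteq> 0}" and cM: "c M = 0"
  shows "Fv q t (c(M:=a)) = (if a = 0 then 1 else 1 + t) * q ^ (M * a) * Fv q t c"
  unfolding Fv_def upd_facts(2,3)[OF fin cM] by (simp add: power_add)

lemma FF_Suc:
  "FF q t (Suc m) n = (\<Sum>a\<le>n. (if a = 0 then 1 else 1 + t) * q ^ (Suc m * a) * FF q t m (n - a))"
proof -
  let ?M = "Suc m"
  let ?T = "Sigma {..n} (\<lambda>a. Cx m (n - a))"
  have "FF q t ?M n = (\<Sum>(a,c)\<in>?T. Fv q t (c(?M :=a)))"
    unfolding FF_def
  proof (rule sum.reindex_bij_witness[where j = "\<lambda>c. (c ?M, c(?M :=0))" and i = "\<lambda>(a,c). c(?M :=a)"])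
    fix c assume c: "c \<in> Cx ?M n"
    show "(case (c ?M, c(?M := 0)) of (a, c) \<Rightarrow> c(?M := a)) = c" by simp
    show "(case (c ?M, c(?M := 0)) of (a, c) \<Rightarrow> Fv q t (c(?M := a))) = Fv q t c" by simp
    have fin0: "finite {j. (c(?M :=0)) j \<noteq> 0}"
      by (rule finite_subset[OF _ Cx_fin[OF c]]) auto
    have e: "fun_upd (fun_upd c ?M 0) ?M (c ?M) = c" by simp
    have "(\<Sum>j\<in>{j. c j \<noteq> 0}. c j) = (\<Sum>j\<in>{j. (c(?M :=0)) j \<noteq> 0}. (c(?M :=0)) j) + c ?M"
      using upd_facts(1)[OF fin0, of ?M "c ?M"] unfolding e by simp
    moreover have "(\<Sum>j\<in>{j. c j \<noteq> 0}. c j) \<le> n" using c by (simp add: Cx_def)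
    ultimately have sm: "(\<Sum>j\<in>{j. (c(?M :=0)) j \<noteq> 0}. (c(?M :=0)) j) \<le> n - c ?M" by linarith
    have bd: "\<forall>j. (c(?M :=0)) j \<noteq> 0 \<longrightarrow> 1 \<le> j \<and> j \<le> m"
      using c by (auto simp: Cx_def) (metis le_SucE)
    have "c(?M :=0) \<in> Cx m (n - c ?M)" unfolding Cx_def using sm bd by blast
    then show "(c ?M, c(?M := 0)) \<in> ?T"
      using Cx_le[OF c, of ?M] by auto
  next
    fix p assume p: "p \<in> ?T"
    obtain a c where pa: "p = (a, c)" by (cases p)
    have a: "a \<le> n" and c: "c \<in> Cx m (n - a)" using p pa by auto
    have cM: "c ?M = 0" using c by (auto simp: Cx_def)
    show "((case p of (a, c) \<Rightarrow> c(?M := a)) ?M, (case p of (a, c) \<Rightarrow> c(?M := a))(?M := 0)) = p"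
      using pa cM by auto
    have "(\<Sum>j\<in>{j. (c(?M :=a)) j \<noteq> 0}. (c(?M :=a)) j) = (\<Sum>j\<in>{j. c j \<noteq> 0}. c j) + a"
      by (rule upd_facts(1)[OF Cx_fin[OF c] cM])
    then show "(case p of (a, c) \<Rightarrow> c(?M := a)) \<in> Cx ?M n"
      using c a pa by (auto simp: Cx_def) (metis le_SucI)
  qed
  also have "\<dots> = (\<Sum>a\<le>n. \<Sum>c\<in>Cx m (n - a). Fv q t (c(?M :=a)))"
    by (subst sum.Sigma[symmetric]) (auto simp: finite_Cx)
  also have "\<dots> = (\<Sum>a\<le>n. (if a = 0 then 1 else 1 + t) * q ^ (?M * a) * FF q t m (n - a))"
    unfolding FF_def sum_distrib_left
  proof (rule sum.cong[OF refl], rule sum.cong[OF refl])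
    fix a c assume "c \<in> Cx m (n - a)"
    then show "Fv q t (c(?M :=a)) = (if a = 0 then 1 else 1 + t) * q ^ (?M * a) * Fv q t c"
      by (intro Fv_upd Cx_fin) (auto simp: Cx_def)
  qed
  finally show ?thesis .
qed

lemma FF_0n: "FF q t 0 n = 1"
proof -
  have "Cx 0 n = {\<lambda>_. 0}" by (auto simp: Cx_def)
  then show ?thesis by (simp add: FF_def Fv_def op_weight_def)
qed

lemma FF_m0: "FF q t m 0 = 1"
proof -
  have "Cx m 0 = {\<lambda>_. 0}"
  proof
    show "Cx m 0 \<subseteq> {\<lambda>_. 0}"
    proof
      fix c assume "c \<in> Cx m 0"
      then have "\<forall>j. c j = 0" using Cx_le by (metis le_zero_eq)
      then show "c \<in> {\<lambda>_. 0}" by auto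
    qed
  qed (auto simp: Cx_def)
  then show ?thesis by (simp add: FF_def Fv_def op_weight_def)
qed

lemma FF_rec:
  "FF q t (Suc m) (Suc n) = FF q t m (Suc n) + q ^ Suc m * FF q t (Suc m) n + t * q ^ Suc m * FF q t m n"
proof -
  let ?w = "\<lambda>a::nat. if a = 0 then 1 else 1 + t"
  have A: "FF q t (Suc m) (Suc n) = FF q t m (Suc n) +
      (\<Sum>a\<le>n. ?w (Suc a) * q ^ (Suc m * Suc a) * FF q t m (n - a))"
    unfolding FF_Suc[of q t m "Suc n"] sum.atMost_Suc_shift by simp
  have B: "q ^ Suc m * FF q t (Suc m) n = (\<Sum>a\<le>n. ?w a * q ^ (Suc m * Suc a) * FF q t m (n - a))"
    unfolding FF_Suc sum_distrib_left
    by (rule sum.cong) (auto simp: power_add mult_ac)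
  have C: "(\<Sum>a\<le>n. ?w (Suc a) * q ^ (Suc m * Suc a) * FF q t m (n - a)) =
      (\<Sum>a\<le>n. ?w a * q ^ (Suc m * Suc a) * FF q t m (n - a)) +
      (\<Sum>a\<le>n. (if a = 0 then t * q ^ Suc m * FF q t m n else 0))"
    unfolding sum.distrib[symmetric]
    by (rule sum.cong) (auto simp: algebra_simps)
  show ?thesis unfolding A B[symmetric] C by simp
qed



fun qb :: "complex \<Rightarrow> nat \<Rightarrow> nat \<Rightarrow> complex" where
  "qb q a 0 = 1"
| "qb q 0 (Suc b) = 0"
| "qb q (Suc a) (Suc b) = qb q a (Suc b) + q ^ (a - b) * qb q a b"

lemma qb_zero: "a < b \<Longrightarrow> qb q a b = 0"
proof (induction a arbitrary: b)
  case 0 then show ?case by (cases b) auto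
next
  case (Suc a) then show ?case by (cases b) auto
qed

lemma qb_diag: "qb q a a = 1"
  by (induction a) (auto simp: qb_zero)

definition Zt :: "complex \<Rightarrow> nat \<Rightarrow> complex" where
  "Zt q k = q ^ (\<Sum>j<k. j + 1)"

lemma Zt_Suc: "Zt q (Suc k) = Zt q k * q ^ (k + 1)"
  by (simp add: Zt_def power_add)

definition TT :: "complex \<Rightarrow> complex \<Rightarrow> nat \<Rightarrow> nat \<Rightarrow> complex" where
  "TT q t m n = (\<Sum>k\<le>n. t ^ k * Zt q k * qb q m k * qb q (m + (n - k)) (n - k))"

lemma TT_m0: "TT q t m 0 = 1"
  by (simp add: TT_def Zt_def)

lemma TT_0n: "TT q t 0 n = 1"
proof (cases n)
  case 0 then show ?thesis by (simp add: TT_def Zt_def)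
next
  case (Suc n')
  show ?thesis unfolding TT_def Suc sum.atMost_Suc_shift
    by (simp add: Zt_def qb_diag)
qed

lemma TT_rec:
  "TT q t (Suc m) (Suc n) = TT q t m (Suc n) + q ^ Suc m * TT q t (Suc m) n + t * q ^ Suc m * TT q t m n"
proof -
  define M where "M = Suc m"
  have s1: "\<And>k. k \<le> Suc n \<Longrightarrow> qb q (M + (Suc n - k)) (Suc n - k) =
      qb q (m + (Suc n - k)) (Suc n - k) + (if k \<le> n then q ^ M * qb q (M + (n - k)) (n - k) else 0)"
  proof -
    fix k assume k: "k \<le> Suc n"
    show "qb q (M + (Suc n - k)) (Suc n - k) =
      qb q (m + (Suc n - k)) (Suc n - k) + (if k \<le> n then q ^ M * qb q (M + (n - k)) (n - k) else 0)"
    proof (cases "k \<le> n")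
      case True
      then have e1: "Suc n - k = Suc (n - k)" by simp
      have e2: "M + Suc (n - k) = Suc (M + (n - k))" "m + Suc (n - k) = M + (n - k)"
        "M + (n - k) - (n - k) = M" by (auto simp: M_def)
      show ?thesis unfolding e1 e2 using True by simp
    next
      case False
      then have "Suc n - k = 0" using k by simp
      then show ?thesis using False by simp
    qed
  qed
  have s2: "\<And>k. qb q M k = qb q m k + (if k = 0 then 0 else q ^ (m - (k - 1)) * qb q m (k - 1))"
    by (case_tac k) (auto simp: M_def)
  have s3: "\<And>j. t ^ Suc j * Zt q (Suc j) * (q ^ (m - j) * qb q m j) = t * q ^ M * (t ^ j * Zt q j * qb q m j)"
  proof -
    fix j
    show "t ^ Suc j * Zt q (Suc j) * (q ^ (m - j) * qb q m j) = t * q ^ M * (t ^ j * Zt q j * qb q m j)"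
    proof (cases "j \<le> m")
      case True
      then have "q ^ (j + 1) * q ^ (m - j) = q ^ M" by (simp add: M_def flip: power_add)
      then show ?thesis unfolding Zt_Suc by (simp add: mult_ac)
    next
      case False then show ?thesis by (simp add: qb_zero)
    qed
  qed
  have "TT q t M (Suc n) = (\<Sum>k\<le>Suc n. t ^ k * Zt q k * qb q M k * qb q (m + (Suc n - k)) (Suc n - k))
     + (\<Sum>k\<le>Suc n. (if k \<le> n then q ^ M * (t ^ k * Zt q k * qb q M k * qb q (M + (n - k)) (n - k)) else 0))"
    unfolding TT_def sum.distrib[symmetric]
  proof (rule sum.cong[OF refl])
    fix k assume "k \<in> {..Suc n}"
    then have k: "k \<le> Suc n" by simp
    show "t ^ k * Zt q k * qb q M k * qb q (M + (Suc n - k)) (Suc n - k) =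
      t ^ k * Zt q k * qb q M k * qb q (m + (Suc n - k)) (Suc n - k) +
      (if k \<le> n then q ^ M * (t ^ k * Zt q k * qb q M k * qb q (M + (n - k)) (n - k)) else 0)"
      unfolding s1[OF k] by (simp add: algebra_simps)
  qed
  also have "(\<Sum>k\<le>Suc n. (if k \<le> n then q ^ M * (t ^ k * Zt q k * qb q M k * qb q (M + (n - k)) (n - k)) else 0))
      = q ^ M * TT q t M n"
    unfolding TT_def sum_distrib_left sum.atMost_Suc by simp
  also have "(\<Sum>k\<le>Suc n. t ^ k * Zt q k * qb q M k * qb q (m + (Suc n - k)) (Suc n - k))
      = TT q t m (Suc n) + (\<Sum>k\<le>Suc n. t ^ k * Zt q k * (if k = 0 then 0 else q ^ (m - (k - 1)) * qb q m (k - 1)) * qb q (m + (Suc n - k)) (Suc n - k))"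
    unfolding TT_def sum.distrib[symmetric]
    by (rule sum.cong[OF refl]) (simp only: s2 algebra_simps)
  also have "(\<Sum>k\<le>Suc n. t ^ k * Zt q k * (if k = 0 then 0 else q ^ (m - (k - 1)) * qb q m (k - 1)) * qb q (m + (Suc n - k)) (Suc n - k))
      = t * q ^ M * TT q t m n"
    (is "?L = _")
  proof -
    have "?L = (\<Sum>j\<le>n. t ^ Suc j * Zt q (Suc j) * (q ^ (m - j) * qb q m j) * qb q (m + (n - j)) (n - j))"
      by (simp only: sum.atMost_Suc_shift) simp
    also have "\<dots> = (\<Sum>j\<le>n. t * q ^ M * (t ^ j * Zt q j * qb q m j * qb q (m + (n - j)) (n - j)))"
      by (rule sum.cong[OF refl]) (unfold s3, simp add: mult_ac)
    finally show ?thesis unfolding TT_def sum_distrib_left .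
  qed
  finally show ?thesis unfolding M_def by (simp add: algebra_simps)
qed

lemma FF_TT: "FF q t m n = TT q t m n"
proof (induction m arbitrary: n)
  case 0 then show ?case by (simp add: FF_0n TT_0n)
next
  case (Suc m)
  note IHm = Suc.IH
  show ?case
  proof (induction n)
    case 0 then show ?case by (simp add: FF_m0 TT_m0)
  next
    case (Suc n)
    then show ?case using IHm by (simp add: FF_rec TT_rec)
  qed
qed



lemma D_Suc: "qpoch q q (Suc x) = qpoch q q x * (1 - q ^ Suc x)"
  by (simp add: qpoch_def)

lemma qb_D: "b \<le> a \<Longrightarrow> qb q a b * qpoch q q b * qpoch q q (a - b) = qpoch q q a"
proof (induction a arbitrary: b)
  case 0 then show ?case by (simp add: qpoch_def)
next
  case (Suc a)
  show ?case
  proof (cases b)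
    case 0 then show ?thesis by (simp add: qpoch_def)
  next
    case (Suc b')
    then have b': "b' \<le> a" using Suc.prems by simp
    show ?thesis
    proof (cases "b' = a")
      case True
      then show ?thesis using Suc by (simp add: qb_zero qb_diag qpoch_def)
    next
      case False
      then have lt: "Suc b' \<le> a" using b' by simp
      have i1: "qb q a (Suc b') * qpoch q q (Suc b') * qpoch q q (a - Suc b') = qpoch q q a"
        using Suc.IH[OF lt] .
      have i2: "qb q a b' * qpoch q q b' * qpoch q q (a - b') = qpoch q q a"
        using Suc.IH[OF b'] .
      have e: "a - b' = Suc (a - Suc b')" using lt by simp
      have pw: "q ^ (a - b') * q ^ Suc b' = q ^ Suc a"
        using b' by (simp flip: power_add)
      have "qb q (Suc a) b * qpoch q q b * qpoch q q (Suc a - b)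
          = qb q a (Suc b') * qpoch q q (Suc b') * qpoch q q (a - b')
            + q ^ (a - b') * (qb q a b' * qpoch q q (Suc b') * qpoch q q (a - b'))"
        using Suc by (simp add: algebra_simps)
      also have "qb q a (Suc b') * qpoch q q (Suc b') * qpoch q q (a - b')
          = qpoch q q a * (1 - q ^ (a - b'))"
      proof -
        have d: "qpoch q q (a - b') = qpoch q q (a - Suc b') * (1 - q ^ (a - b'))"
          by (simp only: e D_Suc)
        show ?thesis unfolding d i1[symmetric] by (simp only: mult_ac)
      qed
      also have "qb q a b' * qpoch q q (Suc b') * qpoch q q (a - b') = qpoch q q a * (1 - q ^ Suc b')"
      proof -
        have d: "qpoch q q (Suc b') = qpoch q q b' * (1 - q ^ Suc b')" by (rule D_Suc)
        show ?thesis unfolding d i2[symmetric] by (simp only: mult_ac)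
      qed
      also have "qpoch q q a * (1 - q ^ (a - b')) + q ^ (a - b') * (qpoch q q a * (1 - q ^ Suc b'))
          = qpoch q q a * (1 - q ^ Suc a)"
        unfolding pw[symmetric] by (simp add: algebra_simps)
      finally show ?thesis unfolding D_Suc .
    qed
  qed
qed

lemma D_nz:
  assumes "x \<le> N" "\<forall>j\<in>{1..N}. q ^ j \<noteq> 1"
  shows "qpoch q q x \<noteq> 0"
proof -
  have "\<forall>j\<in>{..<x}. 1 - q * q ^ j \<noteq> 0"
  proof
    fix j assume "j \<in> {..<x}"
    then have "Suc j \<in> {1..N}" using assms(1) by auto
    then have "q ^ Suc j \<noteq> 1" using assms(2) by blast
    then show "1 - q * q ^ j \<noteq> 0" by simp
  qed
  then show ?thesis unfolding qpoch_def by simp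
qed

definition Ek :: "complex \<Rightarrow> nat \<Rightarrow> complex" where
  "Ek q k = (\<Prod>j<k. - (q ^ j))"

definition Ak :: "complex \<Rightarrow> nat \<Rightarrow> nat \<Rightarrow> complex" where
  "Ak q a k = (\<Prod>j<k. 1 - q ^ (a - j))"

lemma Ainv:
  assumes "q \<noteq> 0" "k \<le> a"
  shows "qpoch (inverse (q ^ a)) q k * q ^ (a * k) = Ek q k * Ak q a k"
  using assms(2)
proof (induction k)
  case 0 then show ?case by (simp add: qpoch_def Ek_def Ak_def)
next
  case (Suc k)
  then have IH: "qpoch (inverse (q ^ a)) q k * q ^ (a * k) = Ek q k * Ak q a k" by simp
  have pw: "q ^ a = q ^ k * q ^ (a - k)" using Suc.prems by (simp flip: power_add)
  have "qpoch (inverse (q ^ a)) q (Suc k) * q ^ (a * Suc k)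
      = (qpoch (inverse (q ^ a)) q k * q ^ (a * k)) * ((1 - inverse (q ^ a) * q ^ k) * q ^ a)"
    by (simp add: qpoch_def power_add algebra_simps)
  also have "(1 - inverse (q ^ a) * q ^ k) * q ^ a = q ^ a - q ^ k"
    using assms(1) by (simp add: algebra_simps)
  also have "q ^ a - q ^ k = - (q ^ k) * (1 - q ^ (a - k))" unfolding pw by (simp add: algebra_simps)
  finally show ?case unfolding IH by (simp add: Ek_def Ak_def algebra_simps)
qed

lemma A_D:
  assumes "k \<le> a"
  shows "qpoch q q (a - k) * Ak q a k = qpoch q q a"
  using assms
proof (induction k)
  case 0 then show ?case by (simp add: Ak_def)
next
  case (Suc k)
  then have IH: "qpoch q q (a - k) * Ak q a k = qpoch q q a" by simp
  have e: "a - k = Suc (a - Suc k)" using Suc.prems by simp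
  have "qpoch q q (a - Suc k) * Ak q a (Suc k) = qpoch q q (a - Suc k) * (1 - q ^ (a - k)) * Ak q a k"
    by (simp add: Ak_def algebra_simps)
  also have "qpoch q q (a - Suc k) * (1 - q ^ (a - k)) = qpoch q q (a - k)"
    by (subst (2) e, subst D_Suc, subst e, simp)
  finally show ?case using IH by simp
qed

lemma Epow: "Ek q k * (-1) ^ k * q ^ k = Zt q k"
  by (induction k) (simp_all add: Ek_def Zt_Suc Zt_def[of q 0] algebra_simps)

lemma qpoch_inv_zero:
  assumes "q \<noteq> 0" "a < k"
  shows "qpoch (inverse (q ^ a)) q k = 0"
  unfolding qpoch_def
proof (rule prod_zero)
  show "\<exists>j\<in>{..<k}. 1 - inverse (q ^ a) * q ^ j = 0"
    using assms by (intro bexI[of _ a]) auto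
qed simp



lemma Ek_nz: "q \<noteq> 0 \<Longrightarrow> Ek q k \<noteq> 0"
  by (simp add: Ek_def)

lemma P_form:
  assumes "q \<noteq> 0" "k \<le> a" "a \<le> N" "\<forall>j\<in>{1..N}. q ^ j \<noteq> 1"
  shows "qpoch (inverse (q ^ a)) q k = Ek q k * qpoch q q a / (qpoch q q (a - k) * q ^ (a * k))"
proof -
  have d: "qpoch q q (a - k) \<noteq> 0" using D_nz[of "a - k" N q] assms by simp
  have A: "Ak q a k = qpoch q q a / qpoch q q (a - k)"
    using A_D[OF assms(2), of q] d by (simp add: field_simps)
  have "qpoch (inverse (q ^ a)) q k = Ek q k * Ak q a k / q ^ (a * k)"
    using Ainv[OF assms(1,2)] assms(1) by (simp add: field_simps)
  then show ?thesis unfolding A using d by simp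
qed

lemma term_eq:
  assumes q: "q \<noteq> 0" and nz: "\<forall>j\<in>{1..m+n}. q ^ j \<noteq> 1" and k: "k \<le> n"
  shows "gauss_binom (m + n) n q * (qpoch (inverse (q ^ n)) q k * qpoch (inverse (q ^ m)) q k
      / (qpoch q q k * qpoch (inverse (q ^ (n + m))) q k) * (- t * q) ^ k)
    = t ^ k * Zt q k * qb q m k * qb q (m + (n - k)) (n - k)"
proof (cases "k \<le> m")
  case False
  then show ?thesis using qpoch_inv_zero[OF q, of m k] qb_zero[of m k] by simp
next
  case True
  let ?D = "qpoch q q"
  have Dnz: "\<And>x. x \<le> m + n \<Longrightarrow> ?D x \<noteq> 0" using D_nz nz by blast
  have Pn: "qpoch (inverse (q ^ n)) q k = Ek q k * ?D n / (?D (n - k) * q ^ (n * k))"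
    by (rule P_form[OF q k _ nz]) simp
  have Pm: "qpoch (inverse (q ^ m)) q k = Ek q k * ?D m / (?D (m - k) * q ^ (m * k))"
    by (rule P_form[OF q True _ nz]) simp
  have PN: "qpoch (inverse (q ^ (n + m))) q k = Ek q k * ?D (n + m) / (?D (m + (n - k)) * q ^ ((n + m) * k))"
    using P_form[OF q _ _ nz, of k "n + m"] k by (simp add: add.commute)
  have qb1: "qb q m k = ?D m / (?D k * ?D (m - k))"
    using qb_D[OF True, of q] Dnz[of k] Dnz[of "m - k"] k True by (simp add: field_simps)
  have qb2: "qb q (m + (n - k)) (n - k) = ?D (m + (n - k)) / (?D (n - k) * ?D m)"
    using qb_D[of "n - k" "m + (n - k)" q] Dnz[of "n - k"] Dnz[of m] k by (simp add: field_simps)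
  have g: "gauss_binom (m + n) n q = ?D (m + n) / (?D m * ?D n)"
    by (simp add: gauss_binom_def mult.commute)
  have Z: "Zt q k = Ek q k * (-1) ^ k * q ^ k" using Epow by simp
  have pw: "q ^ ((n + m) * k) = q ^ (n * k) * q ^ (m * k)" by (simp add: add_mult_distrib power_add)
  have tq: "(- t * q) ^ k = (-1) ^ k * t ^ k * q ^ k" by (simp add: power_mult_distrib power_minus[of "t * q"])
  have nzs: "?D n \<noteq> 0" "?D m \<noteq> 0" "?D k \<noteq> 0" "?D (m - k) \<noteq> 0" "?D (n - k) \<noteq> 0"
    "?D (m + (n - k)) \<noteq> 0" "?D (m + n) \<noteq> 0" "Ek q k \<noteq> 0"
    using Dnz k True Ek_nz[OF q] by auto
  show ?thesis unfolding Pn Pm PN qb1 qb2 g Z pw tq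
    using nzs q by (simp add: field_simps add.commute)
qed



theorem proposition2p4:
  fixes m n :: nat and q t :: complex
  assumes "m \<ge> 1" and "n \<ge> 1"
    and "q \<noteq> 0" and "\<forall>j\<in>{1..m+n}. q ^ j \<noteq> 1"
  shows "over_gauss m n q t =
         gauss_binom (m + n) n q *
         phi21 (q powi (- int n)) (q powi (- int m)) (q powi (- int n - int m)) q (- t * q)"
proof -
  have p1: "q powi (- int n) = inverse (q ^ n)" by (simp add: power_int_minus)
  have p2: "q powi (- int m) = inverse (q ^ m)" by (simp add: power_int_minus)
  have p3: "q powi (- int n - int m) = inverse (q ^ (n + m))"
  proof -
    have "- int n - int m = - int (n + m)" by simp
    then show ?thesis by (simp only: power_int_minus power_int_of_nat)
  qed
  define f where "f k = qpoch (inverse (q ^ n)) q k * qpoch (inverse (q ^ m)) q k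
      / (qpoch q q k * qpoch (inverse (q ^ (n + m))) q k) * (- t * q) ^ k" for k
  have "phi21 (q powi (- int n)) (q powi (- int m)) (q powi (- int n - int m)) q (- t * q) = suminf f"
    unfolding phi21_def p1 p2 p3 f_def ..
  also have "suminf f = (\<Sum>k\<le>n. f k)"
    by (rule suminf_finite) (auto simp: f_def qpoch_inv_zero[OF assms(3)])
  finally have ph: "phi21 (q powi (- int n)) (q powi (- int m)) (q powi (- int n - int m)) q (- t * q) = (\<Sum>k\<le>n. f k)" .
  have "over_gauss m n q t = TT q t m n" by (simp add: over_gauss_FF FF_TT)
  also have "\<dots> = (\<Sum>k\<le>n. gauss_binom (m + n) n q * f k)"
    unfolding TT_def f_def
  proof (rule sum.cong[OF refl])
    fix k assume "k \<in> {..n}"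
    then have k: "k \<le> n" by simp
    show "t ^ k * Zt q k * qb q m k * qb q (m + (n - k)) (n - k) =
      gauss_binom (m + n) n q * (qpoch (inverse (q ^ n)) q k * qpoch (inverse (q ^ m)) q k
      / (qpoch q q k * qpoch (inverse (q ^ (n + m))) q k) * (- t * q) ^ k)"
      by (rule term_eq[OF assms(3,4) k, symmetric])
  qed
  finally show ?thesis unfolding ph sum_distrib_left .
qed

end
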